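(* Assume $\delta<d$, $\gamma\ge1$ and $\alpha=\gamma/(\delta-d)$. Then $$G_z^\alpha(w)=G_h(z^{-\alpha}w)+o(1)\quad\text{as } z\to\infty,$$ i.e. for every $\epsilon>0$ there is $R>0$ such that $|G_z^\alpha(w)-G_h(z^{-\alpha}w)|<\epsilon$ for all $(z,w)$ with $|z|>R$.
   Context: Let $p(z)=z^\delta+O(z^{\delta-1})$ be a monic polynomial of degree $\delta\ge 2$, and let $q(z,w)=b(z)w^d+(\text{terms of lower degree in } w)$ be a polynomial with $d=\deg_w q\ge 2$, where $b$ is a monic polynomial of degree $\gamma$. Let $f(z,w)=(p(z),q(z,w))$. Write $Q_z^n=q_{p^{n-1}(z)}\circ\cdots\circ q_{p(z)}\circ q_z$ with $q_z=q(z,\cdot)$. For $\delta<d$, $\alpha=\max\big(\{-\gamma/(d-\delta)\}\cup\{(n_j-\gamma)/(d-m_j)\}\big)$, the second set over monomials $z^{n_j}w^{m_j}$ appearing in $q$ with nonzero coefficient and $m_j<d$. $G_z^\alpha(w)=\lim_{n\to\infty}d^{-n}\log^+\big(|Q_z^n(w)|/|p^n(z)|^\alpha\big)$. Give the monomial $z^nw^m$ weight $n+\alpha m$; let $h(z,w)$ be the sum of those terms of $q$ of weight exactly $\gamma+\alpha d$ (the maximal weight; it contains $z^\gamma w^d$), and $h(c)=h(1,c)$, a one-variable polynomial of degree $d$, with Green function $G_h(c)=\lim_{n\to\infty}d^{-n}\log^+|h^n(c)|$. The value $G_h(z^{-\alpha}w)$ does not depend on the choice of branch of $z^{-\alpha}$.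 *)

theory Defs
  imports "HOL-Analysis.Analysis" "HOL-Computational_Algebra.Polynomial"
begin

text \<open>A polynomial q(z,w) in two complex variables is given by its coefficient
  function a, where a n m is the coefficient of the monomial z^n w^m
  (finitely supported).\<close>

definition supp2 :: "(nat \<Rightarrow> nat \<Rightarrow> complex) \<Rightarrow> (nat \<times> nat) set" where
  "supp2 a = {(n, m). a n m \<noteq> 0}"

definition qeval :: "(nat \<Rightarrow> nat \<Rightarrow> complex) \<Rightarrow> complex \<Rightarrow> complex \<Rightarrow> complex" where
  "qeval a z w = (\<Sum>(n, m)\<in>supp2 a. a n m * z ^ n * w ^ m)"

text \<open>Qiter p a k z = Q_z^k = q_{p^{k-1}(z)} o ... o q_{p(z)} o q_z.\<close>
primrec Qiter :: "complex poly \<Rightarrow> (nat \<Rightarrow> nat \<Rightarrow> complex) \<Rightarrow> nat \<Rightarrow> complex \<Rightarrow> complex \<Rightarrow> complex" where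
  "Qiter p a 0 z w = w"
| "Qiter p a (Suc k) z w = Qiter p a k (poly p z) (qeval a z w)"

definition log_plus :: "real \<Rightarrow> real" where
  "log_plus x = (if x > 1 then ln x else 0)"

definition alpha_exp :: "(nat \<Rightarrow> nat \<Rightarrow> complex) \<Rightarrow> nat \<Rightarrow> nat \<Rightarrow> nat \<Rightarrow> real" where
  "alpha_exp a \<gamma> \<delta> d = Max ({- real \<gamma> / (real d - real \<delta>)} \<union>
      {(real n - real \<gamma>) / (real d - real m) | n m. a n m \<noteq> 0 \<and> m < d})"

definition G_alpha :: "complex poly \<Rightarrow> (nat \<Rightarrow> nat \<Rightarrow> complex) \<Rightarrow> nat \<Rightarrow> real \<Rightarrow> complex \<Rightarrow> complex \<Rightarrow> real" where
  "G_alpha p a d \<alpha> z w = lim (\<lambda>k. log_plus (cmod (Qiter p a k z w) / (cmod ((poly p ^^ k) z)) powr \<alpha>) / real d ^ k)"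

text \<open>h(c) = h(1,c): sum of the terms of q of weight exactly gamma + alpha d,
  where z^n w^m has weight n + alpha m.\<close>
definition hpoly :: "(nat \<Rightarrow> nat \<Rightarrow> complex) \<Rightarrow> real \<Rightarrow> nat \<Rightarrow> nat \<Rightarrow> complex \<Rightarrow> complex" where
  "hpoly a \<alpha> \<gamma> d c = (\<Sum>(n, m)\<in>{(n, m). a n m \<noteq> 0 \<and> real n + \<alpha> * real m = real \<gamma> + \<alpha> * real d}. a n m * c ^ m)"

definition G_green :: "(complex \<Rightarrow> complex) \<Rightarrow> nat \<Rightarrow> complex \<Rightarrow> real" where
  "G_green h d c = lim (\<lambda>k. log_plus (cmod ((h ^^ k) c)) / real d ^ k)"

end

theory Submission
  imports Defs
begin


lemma log_plus_nonneg: "log_plus x \<ge> 0"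
  by (simp add: log_plus_def)

lemma log_plus_ge_ln: "x > 0 \<Longrightarrow> ln x \<le> log_plus x"
  by (auto simp: log_plus_def) 

lemma log_plus_lip:
  assumes "a \<ge> 0" "b \<ge> 0" shows "\<bar>log_plus a - log_plus b\<bar> \<le> \<bar>a - b\<bar>"
proof -
  have key: "log_plus x - log_plus y \<le> x - y" if "0 \<le> y" "y \<le> x" for x y :: real
  proof (cases "x > 1")
    case True
    show ?thesis
    proof (cases "y > 1")
      case True
      have "ln x - ln y = ln (x / y)" using \<open>y>1\<close> \<open>x>1\<close> by (simp add: ln_div)
      also have "\<dots> \<le> x / y - 1" using \<open>y>1\<close> \<open>x>1\<close> by (intro ln_le_minus_one) auto
      also have "\<dots> = (x - y) / y" using \<open>y>1\<close> by (simp add: field_simps)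
      also have "\<dots> \<le> x - y" using \<open>y>1\<close> that by (simp add: divide_le_eq mult_le_cancel_left1)
      finally show ?thesis using True \<open>x>1\<close> by (simp add: log_plus_def)
    next
      case False
      have "ln x \<le> x - 1" using \<open>x>1\<close> by (intro ln_le_minus_one) auto
      then show ?thesis using False \<open>x>1\<close> by (simp add: log_plus_def)
    qed
  next
    case False
    then show ?thesis using that by (simp add: log_plus_def)
  qed
  have mono: "log_plus y \<le> log_plus x" if "0 \<le> y" "y \<le> x" for x y :: real
    using that by (auto simp: log_plus_def)
  show ?thesis
  proof (cases "b \<le> a")
    case True
    then show ?thesis using key[of b a] mono[of b a] assms by auto
  next
    case False
    then show ?thesis using key[of a b] mono[of a b] assms by auto
  qed
qed

lemma log_plus_rel:
  fixes X Y :: complex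
  assumes "cmod (X - Y) \<le> t * (1 + cmod Y)" "0 \<le> t" "t \<le> 1/4"
  shows "\<bar>log_plus (cmod X) - log_plus (cmod Y)\<bar> \<le> 4 * t"
proof (cases "cmod Y \<le> 1")
  case True
  have "\<bar>cmod X - cmod Y\<bar> \<le> cmod (X - Y)" by (rule norm_triangle_ineq3)
  also have "\<dots> \<le> t * 2" using assms(1) True assms(2) mult_left_mono[of "1 + cmod Y" 2 t] by linarith
  also have "\<dots> = 2 * t" by simp
  finally show ?thesis using log_plus_lip[of "cmod X" "cmod Y"] assms by auto
next
  case False
  let ?x = "cmod X" and ?y = "cmod Y"
  have "t * (1 + ?y) \<le> t * (2 * ?y)" using False assms by (intro mult_left_mono) auto
  then have d: "cmod (X - Y) \<le> 2 * t * ?y" using assms by simp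
  have xu: "?x \<le> (1 + 2*t) * ?y" using d norm_triangle_ineq2[of X Y] by (simp add: algebra_simps)
  have xl: "?x \<ge> (1 - 2*t) * ?y" using d norm_triangle_ineq3[of X Y] by (simp add: algebra_simps)
  have "(1 - 2*t) * ?y \<ge> (1/2) * ?y" using assms by (intro mult_right_mono) auto
  then have xpos: "?x \<ge> ?y / 2" using xl by simp
  have ly: "log_plus ?y = ln ?y" using False by (simp add: log_plus_def)
  have up: "log_plus ?x \<le> ln ?y + 2 * t"
  proof (cases "?x > 1")
    case True
    have "ln ?x \<le> ln ((1 + 2*t) * ?y)" using xu True by (intro ln_mono) auto
    also have "\<dots> = ln (1 + 2*t) + ln ?y" using assms False by (subst ln_mult) auto
    also have "ln (1 + 2*t) \<le> 2 * t" using assms by (intro ln_add_one_self_le_self) auto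
    finally show ?thesis using True by (simp add: log_plus_def)
  next
    case False
    then show ?thesis using \<open>\<not> ?y \<le> 1\<close> assms by (simp add: log_plus_def)
  qed
  have lo: "ln ?y - 4 * t \<le> log_plus ?x"
  proof -
    have xp: "?x > 0" using xpos False by auto
    have "ln ?y - ln ?x = ln (?y / ?x)" using xp False by (subst ln_div) auto
    also have "\<dots> \<le> ?y / ?x - 1" using xp False by (intro ln_le_minus_one divide_pos_pos) auto
    also have "\<dots> = (?y - ?x) / ?x" using xp by (simp add: field_simps)
    also have "\<dots> \<le> (2 * t * ?y) / ?x"
      using xp d norm_triangle_ineq3[of X Y] by (intro divide_right_mono) (auto simp: norm_minus_commute)
    also have "\<dots> \<le> 4 * t"
    proof -
      have "2 * t * ?y \<le> 4 * t * ?x" using xpos assms mult_left_mono[of "?y" "2 * ?x" "2*t"] by linarith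
      then show ?thesis using xp by (simp add: divide_le_eq)
    qed
    finally show ?thesis using log_plus_ge_ln[OF xp] by linarith
  qed
  show ?thesis using up lo ly assms by linarith
qed

lemma log_plus_upper:
  assumes "0 \<le> y" "y \<le> A * max 1 x ^ d" "A \<ge> 1" "x \<ge> 0"
  shows "log_plus y \<le> ln A + real d * log_plus x"
proof -
  have m: "max 1 x > 0" by auto
  have lm: "ln (max 1 x) = log_plus x" by (auto simp: log_plus_def max_def)
  show ?thesis
  proof (cases "y > 1")
    case True
    have "ln y \<le> ln (A * max 1 x ^ d)" using True assms by (intro ln_mono) auto
    also have "\<dots> = ln A + real d * ln (max 1 x)" using assms m by (simp add: ln_mult ln_realpow)
    finally show ?thesis using True lm by (simp add: log_plus_def)
  next
    case False
    then show ?thesis using assms log_plus_nonneg[of x] by (simp add: log_plus_def)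
  qed
qed



lemma lim_bound:
  fixes g :: "nat \<Rightarrow> real" and D K :: real
  assumes D: "D \<ge> 2" and K: "K \<ge> 0" and step: "\<And>n. \<bar>g (Suc n) - g n\<bar> \<le> K / D ^ Suc n"
  shows "convergent g" "\<bar>lim g - g N\<bar> \<le> K / D ^ N"
proof -
  have Dp: "D > 0" using D by auto
  have sg: "summable (\<lambda>n. (K / D) * (1 / D) ^ n)"
    using D by (intro summable_mult summable_geometric) auto
  have ss: "summable (\<lambda>n. g (Suc n) - g n)"
  proof (rule summable_comparison_test[OF _ sg])
    show "\<exists>N. \<forall>n\<ge>N. norm (g (Suc n) - g n) \<le> K / D * (1 / D) ^ n"
      using step by (auto simp: power_divide field_simps)
  qed
  have "(\<lambda>m. \<Sum>n<m. g (Suc n) - g n) \<longlonglongrightarrow> suminf (\<lambda>n. g (Suc n) - g n)"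
    by (rule summable_LIMSEQ[OF ss])
  then have "(\<lambda>m. g m - g 0) \<longlonglongrightarrow> suminf (\<lambda>n. g (Suc n) - g n)"
    by (simp add: sum_lessThan_telescope)
  then have "(\<lambda>m. (g m - g 0) + g 0) \<longlonglongrightarrow> suminf (\<lambda>n. g (Suc n) - g n) + g 0"
    by (intro tendsto_add) auto
  then have "g \<longlonglongrightarrow> suminf (\<lambda>n. g (Suc n) - g n) + g 0" by simp
  then show conv: "convergent g" by (auto simp: convergent_def)
  have fin: "\<bar>g (N + j) - g N\<bar> \<le> K / D ^ N - K / D ^ (N + j)" for j
  proof (induction j)
    case 0 then show ?case by simp
  next
    case (Suc j)
    have s: "\<bar>g (N + Suc j) - g (N + j)\<bar> \<le> K / D ^ Suc (N + j)" using step[of "N+j"] by simp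
    have "K / D ^ Suc (N + j) + K / D ^ Suc (N + j) \<le> K / D ^ (N + j)"
    proof -
      have "K / D ^ Suc (N + j) + K / D ^ Suc (N + j) = (2 / D) * (K / D ^ (N + j))"
        using Dp by (simp add: field_simps)
      also have "\<dots> \<le> 1 * (K / D ^ (N + j))"
        using D Dp K by (intro mult_right_mono) auto
      finally show ?thesis by simp
    qed
    then show ?case using Suc s by simp
  qed
  have ev: "eventually (\<lambda>m. \<bar>g m - g N\<bar> \<le> K / D ^ N) sequentially"
  proof (rule eventually_sequentiallyI[of N])
    fix m assume "N \<le> m"
    then obtain j where "m = N + j" using le_Suc_ex by blast
    moreover have "K / D ^ (N + j) \<ge> 0" using K Dp by auto
    ultimately show "\<bar>g m - g N\<bar> \<le> K / D ^ N" using fin[of j] by simp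
  qed
  have "(\<lambda>m. \<bar>g m - g N\<bar>) \<longlonglongrightarrow> \<bar>lim g - g N\<bar>"
    using conv by (intro tendsto_rabs tendsto_diff) (auto simp: convergent_LIMSEQ_iff)
  then show "\<bar>lim g - g N\<bar> \<le> K / D ^ N"
    by (rule tendsto_upperbound[OF _ ev]) simp
qed



lemma log_plus_mono: "0 \<le> a \<Longrightarrow> a \<le> b \<Longrightarrow> log_plus a \<le> log_plus b"
  by (auto simp: log_plus_def)

locale hgood =
  fixes h :: "complex \<Rightarrow> complex" and d :: nat and B R1 C :: real
  assumes d2: "d \<ge> 2" and B1: "B \<ge> 1" and R1: "R1 \<ge> 1" and C0: "C \<ge> 0"
    and hB: "\<And>x. cmod (h x) \<le> B * (1 + cmod x) ^ d"
    and hL: "\<And>x. cmod x \<ge> R1 \<Longrightarrow> cmod (h x) \<ge> cmod x ^ d / 2"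
    and hC: "\<And>X Y t. 0 \<le> t \<Longrightarrow> t \<le> 1 \<Longrightarrow> cmod (X - Y) \<le> t * (1 + cmod Y) \<Longrightarrow>
               cmod (h X - h Y) \<le> C * t * (1 + cmod (h Y))"
begin

definition "Cp = (1 + R1) ^ d + 2 ^ (d + 1)"

lemma R1pow: "(1 + R1) ^ d \<ge> 0"
  using R1 by (intro zero_le_power) auto
definition "Kh = ln (B * 2 ^ d) + real d * ln R1 + ln 2"
definition "M = 1 + C + 2 ^ d * Cp"

lemma Cp_pos: "Cp \<ge> 1"
proof -
  have "0 \<le> (1+R1)^d" by (rule R1pow)
  moreover have "(1::real) \<le> 2^(d+1)" by (rule one_le_power) simp
  ultimately show ?thesis unfolding Cp_def by linarith
qed

lemma B2d: "B * 2 ^ d \<ge> 1"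
proof -
  have "(1::real) * 1 \<le> B * 2 ^ d" by (rule mult_mono) (use B1 in auto)
  then show ?thesis by simp
qed

lemma Kh_nonneg: "Kh \<ge> 0"
proof -
  have "ln (B * 2 ^ d) \<ge> 0" using B2d by (intro ln_ge_zero) auto
  moreover have "ln R1 \<ge> 0" using R1 by simp
  ultimately show ?thesis unfolding Kh_def by simp
qed

lemma M_ge: "M \<ge> 1"
  using C0 Cp_pos unfolding M_def by simp

lemma Cp_bound: "(1 + cmod Y) ^ d \<le> Cp * (1 + cmod (h Y))"
proof (cases "cmod Y \<le> R1")
  case True
  have "(1 + cmod Y) ^ d \<le> (1 + R1) ^ d" using True by (intro power_mono) auto
  also have "\<dots> \<le> Cp" unfolding Cp_def by simp
  also have "\<dots> \<le> Cp * (1 + cmod (h Y))" using Cp_pos by simp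
  finally show ?thesis .
next
  case False
  have "(1 + cmod Y) ^ d \<le> (2 * cmod Y) ^ d" using False R1 by (intro power_mono) auto
  also have "\<dots> = 2 ^ d * cmod Y ^ d" by (simp add: power_mult_distrib)
  also have "\<dots> \<le> 2 ^ d * (2 * cmod (h Y))" using hL[of Y] False by simp
  also have "\<dots> = 2 ^ (d+1) * cmod (h Y)" by simp
  also have "\<dots> \<le> 2 ^ (d+1) * (1 + cmod (h Y))" by simp
  also have "\<dots> \<le> Cp * (1 + cmod (h Y))" unfolding Cp_def
    using R1pow by (intro mult_right_mono) auto
  finally show ?thesis .
qed

lemma Kh_step: "\<bar>log_plus (cmod (h x)) - real d * log_plus (cmod x)\<bar> \<le> Kh"
proof -
  have up: "log_plus (cmod (h x)) \<le> ln (B * 2 ^ d) + real d * log_plus (cmod x)"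
  proof (rule log_plus_upper)
    have "cmod (h x) \<le> B * (1 + cmod x) ^ d" by (rule hB)
    also have "(1 + cmod x) ^ d \<le> (2 * max 1 (cmod x)) ^ d" by (intro power_mono) auto
    finally show "cmod (h x) \<le> B * 2 ^ d * max 1 (cmod x) ^ d"
      using B1 by (simp add: power_mult_distrib mult_ac)
    show "B * 2 ^ d \<ge> 1" by (rule B2d)
  qed auto
  have lo: "real d * log_plus (cmod x) - ln 2 - real d * ln R1 \<le> log_plus (cmod (h x))"
  proof (cases "cmod x \<ge> R1")
    case True
    have xp: "cmod x > 0" using True R1 by auto
    have lx: "log_plus (cmod x) = ln (cmod x)"
    proof (cases "cmod x > 1")
      case False
      then have "cmod x = 1" using True R1 by auto
      then show ?thesis by (simp add: log_plus_def)
    qed (simp add: log_plus_def)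
    have "ln (cmod x ^ d / 2) \<le> log_plus (cmod (h x))"
    proof -
      have "ln (cmod x ^ d / 2) \<le> log_plus (cmod x ^ d / 2)" using xp by (intro log_plus_ge_ln) auto
      also have "\<dots> \<le> log_plus (cmod (h x))"
        using hL[OF True] by (intro log_plus_mono) auto
      finally show ?thesis .
    qed
    moreover have "ln (cmod x ^ d / 2) = real d * ln (cmod x) - ln 2"
      using xp by (simp add: ln_div ln_realpow)
    moreover have "real d * ln R1 \<ge> 0" using R1 by simp
    ultimately show ?thesis using lx by simp
  next
    case False
    have "log_plus (cmod x) \<le> ln R1"
      using False R1 by (auto simp: log_plus_def intro!: ln_mono)
    then have "real d * log_plus (cmod x) \<le> real d * ln R1" by (intro mult_left_mono) auto
    moreover have "ln (2::real) \<ge> 0" by simp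
    ultimately show ?thesis using log_plus_nonneg[of "cmod (h x)"] by linarith
  qed
  have "ln (B * 2 ^ d) \<ge> 0" using B2d by (intro ln_ge_zero) auto
  moreover have "real d * ln R1 \<ge> 0" using R1 by simp
  moreover have "ln (2::real) \<ge> 0" by simp
  ultimately show ?thesis using up lo unfolding Kh_def by linarith
qed

lemma pert_step:
  assumes "0 \<le> \<eta>" "\<eta> * ((B + 1) * Cp) \<le> 1/4" "cmod (\<theta> - 1) \<le> \<eta>" "cmod (E) \<le> \<eta> * (1 + cmod x) ^ d"
  shows "\<bar>log_plus (cmod (\<theta> * h x + E)) - real d * log_plus (cmod x)\<bar> \<le> Kh + 1"
proof -
  have "cmod (\<theta> * h x + E - h x) = cmod ((\<theta> - 1) * h x + E)" by (simp add: algebra_simps)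
  also have "\<dots> \<le> cmod (\<theta> - 1) * cmod (h x) + cmod E" by (metis norm_mult norm_triangle_ineq)
  also have "\<dots> \<le> \<eta> * (B * (1 + cmod x) ^ d) + \<eta> * (1 + cmod x) ^ d"
    using assms hB[of x] by (intro add_mono mult_mono) auto
  also have "\<dots> = (\<eta> * (B + 1)) * (1 + cmod x) ^ d" by (simp add: algebra_simps)
  also have "\<dots> \<le> (\<eta> * (B + 1)) * (Cp * (1 + cmod (h x)))"
    using assms B1 Cp_bound[of x] by (intro mult_left_mono) auto
  finally have "cmod (\<theta> * h x + E - h x) \<le> (\<eta> * ((B + 1) * Cp)) * (1 + cmod (h x))"
    by (simp add: mult_ac)
  then have "\<bar>log_plus (cmod (\<theta> * h x + E)) - log_plus (cmod (h x))\<bar> \<le> 4 * (\<eta> * ((B + 1) * Cp))"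
    using assms B1 Cp_pos by (intro log_plus_rel) auto
  then show ?thesis using Kh_step[of x] assms by linarith
qed

lemma close_step:
  assumes t: "0 \<le> t" "t \<le> 1" and e: "0 \<le> \<eta>" "\<eta> \<le> 1"
    and XY: "cmod (X - Y) \<le> t * (1 + cmod Y)"
    and th: "cmod (\<theta> - 1) \<le> \<eta>" and E: "cmod E \<le> \<eta> * (1 + cmod X) ^ d"
  shows "cmod (\<theta> * h X + E - h Y) \<le> M * (t + \<eta>) * (1 + cmod (h Y))"
proof -
  let ?hY = "1 + cmod (h Y)"
  have hd: "cmod (h X - h Y) \<le> C * t * ?hY" using hC[OF t XY] .
  have hX: "cmod (h X) \<le> (1 + C) * ?hY"
  proof -
    have "cmod (h X) \<le> cmod (h Y) + cmod (h X - h Y)" by (metis norm_triangle_sub add.commute)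
    also have "\<dots> \<le> cmod (h Y) + C * t * ?hY" using hd by simp
    also have "C * t * ?hY \<le> C * 1 * ?hY" using t C0 by (intro mult_right_mono mult_left_mono) auto
    finally show ?thesis by (simp add: algebra_simps)
  qed
  have X1: "1 + cmod X \<le> 2 * (1 + cmod Y)"
  proof -
    have "cmod X \<le> cmod Y + cmod (X - Y)" by (metis norm_triangle_sub add.commute)
    also have "\<dots> \<le> cmod Y + t * (1 + cmod Y)" using XY by simp
    also have "t * (1 + cmod Y) \<le> 1 * (1 + cmod Y)" using t by (intro mult_right_mono) auto
    finally show ?thesis by simp
  qed
  have EX: "cmod E \<le> \<eta> * (2 ^ d * Cp) * ?hY"
  proof -
    have "(1 + cmod X) ^ d \<le> (2 * (1 + cmod Y)) ^ d" using X1 by (intro power_mono) auto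
    also have "\<dots> = 2 ^ d * (1 + cmod Y) ^ d" by (simp only: power_mult_distrib)
    also have "\<dots> \<le> 2 ^ d * (Cp * ?hY)" using Cp_bound[of Y] by (intro mult_left_mono) auto
    finally have "\<eta> * (1 + cmod X) ^ d \<le> \<eta> * (2 ^ d * (Cp * ?hY))" using e by (intro mult_left_mono) auto
    then show ?thesis using E by (simp add: mult_ac)
  qed
  have "cmod (\<theta> * h X + E - h Y) = cmod ((\<theta> - 1) * h X + (h X - h Y) + E)" by (simp add: algebra_simps)
  also have "\<dots> \<le> cmod (\<theta> - 1) * cmod (h X) + cmod (h X - h Y) + cmod E"
  proof -
    have a: "cmod ((\<theta> - 1) * h X + (h X - h Y) + E) \<le> cmod ((\<theta> - 1) * h X + (h X - h Y)) + cmod E"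
      by (rule norm_triangle_ineq)
    have b: "cmod ((\<theta> - 1) * h X + (h X - h Y)) \<le> cmod ((\<theta> - 1) * h X) + cmod (h X - h Y)"
      by (rule norm_triangle_ineq)
    show ?thesis using a b unfolding norm_mult by linarith
  qed
  also have "\<dots> \<le> \<eta> * ((1 + C) * ?hY) + C * t * ?hY + \<eta> * (2 ^ d * Cp) * ?hY"
  proof -
    have "cmod (\<theta> - 1) * cmod (h X) \<le> \<eta> * ((1 + C) * ?hY)"
      by (rule mult_mono) (use th hX e in auto)
    then show ?thesis using hd EX by linarith
  qed
  also have "\<dots> = (C * t + \<eta> * (1 + C + 2 ^ d * Cp)) * ?hY" by (simp add: algebra_simps)
  also have "\<dots> \<le> M * (t + \<eta>) * ?hY"
  proof -
    have CM: "C \<le> M" using Cp_pos unfolding M_def by simp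
    have "C * t \<le> M * t" using t CM by (intro mult_right_mono) auto
    moreover have "\<eta> * (1 + C + 2 ^ d * Cp) = M * \<eta>" unfolding M_def by simp
    ultimately have "C * t + \<eta> * (1 + C + 2 ^ d * Cp) \<le> M * (t + \<eta>)" by (simp add: algebra_simps)
    then show ?thesis by (intro mult_right_mono) auto
  qed
  finally show ?thesis .
qed


lemma orbit_close:
  assumes e: "0 \<le> \<eta>" "\<eta> * (2 * M) ^ N \<le> 1"
    and th: "\<And>n. cmod (\<theta> n - 1) \<le> \<eta>"
    and E: "\<And>n x. cmod (E n x) \<le> \<eta> * (1 + cmod x) ^ d"
    and X: "\<And>n. X (Suc n) = \<theta> n * h (X n) + E n (X n)"
  shows "n \<le> N \<Longrightarrow> cmod (X n - (h ^^ n) (X 0)) \<le> \<eta> * (2 * M) ^ n * (1 + cmod ((h ^^ n) (X 0)))"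
proof (induction n)
  case 0 then show ?case using e by simp
next
  case (Suc n)
  have M2: "2 * M \<ge> 1" using M_ge by simp
  have tle: "\<eta> * (2 * M) ^ n \<le> 1"
  proof -
    have "(2 * M) ^ n \<le> (2 * M) ^ N" using Suc.prems M2 by (intro power_increasing) auto
    then have "\<eta> * (2 * M) ^ n \<le> \<eta> * (2 * M) ^ N" using e by (intro mult_left_mono) auto
    then show ?thesis using e by linarith
  qed
  have eta1: "\<eta> \<le> \<eta> * (2 * M) ^ n"
    using mult_left_mono[OF one_le_power[OF M2] e(1), of n] by simp
  have t0: "0 \<le> \<eta> * (2 * M) ^ n" using e M2 by simp
  have "cmod (\<theta> n * h (X n) + E n (X n) - h ((h ^^ n) (X 0)))
      \<le> M * (\<eta> * (2 * M) ^ n + \<eta>) * (1 + cmod (h ((h ^^ n) (X 0))))"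
  proof -
    have e1: "\<eta> \<le> 1" using eta1 tle by linarith
    have IH: "cmod (X n - (h ^^ n) (X 0)) \<le> \<eta> * (2 * M) ^ n * (1 + cmod ((h ^^ n) (X 0)))"
      using Suc.IH Suc.prems by simp
    show ?thesis by (rule close_step[OF t0 tle e(1) e1 IH th E])
  qed
  also have "\<dots> \<le> \<eta> * (2 * M) ^ Suc n * (1 + cmod (h ((h ^^ n) (X 0))))"
  proof (intro mult_right_mono)
    have "M * (\<eta> * (2 * M) ^ n + \<eta>) \<le> M * (2 * (\<eta> * (2 * M) ^ n))"
      using eta1 M_ge by (intro mult_left_mono) auto
    then show "M * (\<eta> * (2 * M) ^ n + \<eta>) \<le> \<eta> * (2 * M) ^ Suc n" by (simp add: mult_ac)
  qed auto
  finally show ?case using X by simp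
qed

lemma g_step:
  assumes "\<And>n. \<bar>log_plus (cmod (X (Suc n))) - real d * log_plus (cmod (X n))\<bar> \<le> K"
  shows "\<bar>log_plus (cmod (X (Suc n))) / real d ^ Suc n - log_plus (cmod (X n)) / real d ^ n\<bar> \<le> K / real d ^ Suc n"
proof -
  have dp: "real d > 0" using d2 by auto
  have "log_plus (cmod (X (Suc n))) / real d ^ Suc n - log_plus (cmod (X n)) / real d ^ n
     = (log_plus (cmod (X (Suc n))) - real d * log_plus (cmod (X n))) / real d ^ Suc n"
    using dp by (simp add: field_simps)
  then show ?thesis using assms[of n] dp by (simp add: abs_divide divide_right_mono)
qed

theorem green_compare:
  assumes eps: "\<epsilon> > 0"
  shows "\<exists>\<eta>>0. \<forall>\<theta> E X. (\<forall>n. cmod (\<theta> n - 1) \<le> \<eta>) \<longrightarrow> (\<forall>n x. cmod (E n x) \<le> \<eta> * (1 + cmod x) ^ d)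
     \<longrightarrow> (\<forall>n. X (Suc n) = \<theta> n * h (X n) + E n (X n))
     \<longrightarrow> \<bar>lim (\<lambda>k. log_plus (cmod (X k)) / real d ^ k) - G_green h d (X 0)\<bar> < \<epsilon>"
proof -
  define K where "K = Kh + 1"
  have K0: "K \<ge> 0" using Kh_nonneg unfolding K_def by simp
  have D: "real d \<ge> 2" using d2 by simp
  obtain N where N: "4 * K / \<epsilon> < real d ^ N" using real_arch_pow[of "real d" "4 * K / \<epsilon>"] D by auto
  have dN: "real d ^ N > 0" using D by simp
  have KN: "2 * K / real d ^ N < \<epsilon> / 2"
    using N eps dN by (simp add: field_simps)
  have M2: "2 * M \<ge> 1" using M_ge by simp
  have MN: "(2 * M) ^ N \<ge> 1" using M2 by (rule one_le_power)
  define \<eta> where "\<eta> = min (1 / (4 * ((B + 1) * Cp))) (min (1 / (4 * (2 * M) ^ N)) (\<epsilon> / (16 * (2 * M) ^ N)))"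
  have BC: "(B + 1) * Cp \<ge> 1"
  proof -
    have "(1::real) * 1 \<le> (B + 1) * Cp" using B1 Cp_pos by (intro mult_mono) auto
    then show ?thesis by simp
  qed
  have e0: "\<eta> > 0" unfolding \<eta>_def using eps MN BC by auto
  have e1: "\<eta> * ((B + 1) * Cp) \<le> 1/4"
  proof -
    have "\<eta> * ((B + 1) * Cp) \<le> (1 / (4 * ((B + 1) * Cp))) * ((B + 1) * Cp)"
      using BC unfolding \<eta>_def by (intro mult_right_mono) auto
    also have "\<dots> = 1/4" using BC by (simp add: field_simps)
    finally show ?thesis .
  qed
  have e2: "\<eta> * (2 * M) ^ N \<le> \<epsilon> / 16"
  proof -
    have "\<eta> * (2 * M) ^ N \<le> (\<epsilon> / (16 * (2 * M) ^ N)) * (2 * M) ^ N"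
      using MN unfolding \<eta>_def by (intro mult_right_mono) auto
    also have "\<dots> = \<epsilon> / 16" using MN M_ge by (simp add: field_simps)
    finally show ?thesis .
  qed
  have e3: "\<eta> * (2 * M) ^ N \<le> 1/4"
  proof -
    have "\<eta> * (2 * M) ^ N \<le> (1 / (4 * (2 * M) ^ N)) * (2 * M) ^ N"
      using MN unfolding \<eta>_def by (intro mult_right_mono) auto
    also have "\<dots> = 1/4" using MN M_ge by (simp add: field_simps)
    finally show ?thesis .
  qed
  show ?thesis
  proof (intro exI[of _ \<eta>] conjI e0 allI impI)
    fix \<theta> E X
    assume th: "\<forall>n. cmod (\<theta> n - 1) \<le> \<eta>" and EE: "\<forall>n x. cmod (E n x) \<le> \<eta> * (1 + cmod x) ^ d"
      and XX: "\<forall>n. X (Suc n) = \<theta> n * h (X n) + E n (X n)"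
    define Y where "Y = (\<lambda>k. (h ^^ k) (X 0))"
    define gX where "gX = (\<lambda>k. log_plus (cmod (X k)) / real d ^ k)"
    define gY where "gY = (\<lambda>k. log_plus (cmod (Y k)) / real d ^ k)"
    have sX: "\<bar>log_plus (cmod (X (Suc n))) - real d * log_plus (cmod (X n))\<bar> \<le> K" for n
    proof -
      have "X (Suc n) = \<theta> n * h (X n) + E n (X n)" using XX by blast
      moreover have "cmod (\<theta> n - 1) \<le> \<eta>" using th by blast
      moreover have "cmod (E n (X n)) \<le> \<eta> * (1 + cmod (X n)) ^ d" using EE by blast
      ultimately show ?thesis
        using pert_step[of \<eta> "\<theta> n" "E n (X n)" "X n"] e0 e1 unfolding K_def by simp
    qed
    have sY: "\<bar>log_plus (cmod (Y (Suc n))) - real d * log_plus (cmod (Y n))\<bar> \<le> K" for n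
      using Kh_step[of "Y n"] unfolding K_def Y_def by simp
    have lX: "\<bar>lim gX - gX N\<bar> \<le> K / real d ^ N"
      unfolding gX_def by (rule lim_bound(2)[OF D K0 g_step[where X=X and K=K, OF sX]])
    have lY: "\<bar>lim gY - gY N\<bar> \<le> K / real d ^ N"
      unfolding gY_def by (rule lim_bound(2)[OF D K0 g_step[where X=Y and K=K, OF sY]])
    have cl: "cmod (X N - Y N) \<le> \<eta> * (2 * M) ^ N * (1 + cmod (Y N))"
    proof -
      have "\<eta> * (2 * M) ^ N \<le> 1" using e3 by linarith
      then show ?thesis
        unfolding Y_def using orbit_close[of \<eta> N \<theta> E X N] e0 th EE XX by simp
    qed
    have "\<bar>log_plus (cmod (X N)) - log_plus (cmod (Y N))\<bar> \<le> 4 * (\<eta> * (2 * M) ^ N)"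
      using cl e0 e3 MN by (intro log_plus_rel) auto
    then have lc: "\<bar>log_plus (cmod (X N)) - log_plus (cmod (Y N))\<bar> \<le> \<epsilon> / 4" using e2 by linarith
    have dN1: "real d ^ N \<ge> 1" using D by (intro one_le_power) auto
    have "\<bar>gX N - gY N\<bar> = \<bar>log_plus (cmod (X N)) - log_plus (cmod (Y N))\<bar> / real d ^ N"
      unfolding gX_def gY_def by (simp add: diff_divide_distrib[symmetric] abs_divide)
    also have "\<dots> \<le> \<bar>log_plus (cmod (X N)) - log_plus (cmod (Y N))\<bar>"
      using dN1 by (simp add: divide_le_eq mult_le_cancel_left1)  
    finally have gc: "\<bar>gX N - gY N\<bar> \<le> \<epsilon> / 4" using lc by linarith
    have G: "G_green h d (X 0) = lim gY" unfolding G_green_def gY_def Y_def by simp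
    have "2 * K / real d ^ N = K / real d ^ N + K / real d ^ N" by simp
    then show "\<bar>lim gX - G_green h d (X 0)\<bar> < \<epsilon>"
      unfolding G[folded gX_def] using lX lY gc KN by linarith
  qed
qed

end



lemma pow_diff_bound:
  fixes X Y :: complex
  assumes "cmod X \<le> R" "cmod Y \<le> R"
  shows "cmod (X ^ Suc k - Y ^ Suc k) \<le> real (Suc k) * cmod (X - Y) * R ^ k"
proof (induction k)
  case 0 then show ?case by simp
next
  case (Suc k)
  have R0: "R \<ge> 0" using assms(1) norm_ge_zero order_trans by blast
  have "X ^ Suc (Suc k) - Y ^ Suc (Suc k) = X * (X ^ Suc k - Y ^ Suc k) + (X - Y) * Y ^ Suc k"
    by (simp add: algebra_simps)
  then have "cmod (X ^ Suc (Suc k) - Y ^ Suc (Suc k)) \<le> cmod X * cmod (X ^ Suc k - Y ^ Suc k) + cmod (X - Y) * cmod Y ^ Suc k"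
    by (metis norm_mult norm_power norm_triangle_ineq)
  also have "\<dots> \<le> R * (real (Suc k) * cmod (X - Y) * R ^ k) + cmod (X - Y) * R ^ Suc k"
    using Suc.IH assms R0 by (intro add_mono mult_mono power_mono mult_left_mono) auto
  also have "\<dots> = real (Suc (Suc k)) * cmod (X - Y) * R ^ Suc k" by (simp add: algebra_simps)
  finally show ?case .
qed

lemma pow_diff_bound2:
  fixes X Y :: complex
  assumes "cmod X \<le> R" "cmod Y \<le> R" "R \<ge> 1" "m \<le> D"
  shows "cmod (X ^ m - Y ^ m) \<le> real D * cmod (X - Y) * R ^ (D - 1)"
proof (cases m)
  case 0 then show ?thesis using assms(3) by simp
next
  case (Suc k)
  have "cmod (X ^ m - Y ^ m) \<le> real (Suc k) * cmod (X - Y) * R ^ k"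
    using pow_diff_bound[OF assms(1,2)] Suc by simp
  also have "\<dots> \<le> real D * cmod (X - Y) * R ^ (D - 1)"
    using assms Suc by (intro mult_mono power_increasing) auto
  finally show ?thesis .
qed

lemma sum_bound:
  fixes f :: "nat \<Rightarrow> nat \<Rightarrow> complex"
  assumes "finite S" "\<And>n m. (n, m) \<in> S \<Longrightarrow> m \<le> D"
  shows "cmod (\<Sum>(n, m)\<in>S. f n m * x ^ m) \<le> (\<Sum>(n, m)\<in>S. cmod (f n m)) * (1 + cmod x) ^ D"
proof -
  have "cmod (\<Sum>(n, m)\<in>S. f n m * x ^ m) \<le> (\<Sum>(n, m)\<in>S. cmod (f n m * x ^ m))"
    by (rule norm_sum[THEN order_trans]) (simp add: case_prod_unfold)
  also have "\<dots> \<le> (\<Sum>(n, m)\<in>S. cmod (f n m) * (1 + cmod x) ^ D)"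
  proof (rule sum_mono)
    fix p assume p: "p \<in> S"
    obtain n m where nm: "p = (n, m)" by (cases p)
    have "cmod x ^ m \<le> (1 + cmod x) ^ m" by (intro power_mono) auto
    also have "\<dots> \<le> (1 + cmod x) ^ D" using assms(2)[of n m] p nm by (intro power_increasing) auto
    finally show "(case p of (n, m) \<Rightarrow> cmod (f n m * x ^ m)) \<le> (case p of (n, m) \<Rightarrow> cmod (f n m) * (1 + cmod x) ^ D)"
      using nm by (simp add: norm_mult norm_power mult_left_mono)
  qed
  also have "\<dots> = (\<Sum>(n, m)\<in>S. cmod (f n m)) * (1 + cmod x) ^ D"
    by (simp add: sum_distrib_right case_prod_unfold)
  finally show ?thesis .
qed

lemma sum_diff_bound:
  fixes f :: "nat \<Rightarrow> nat \<Rightarrow> complex"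
  assumes "finite S" "\<And>n m. (n, m) \<in> S \<Longrightarrow> m \<le> D" "D \<ge> 1"
    and t: "0 \<le> t" "t \<le> 1" and XY: "cmod (X - Y) \<le> t * (1 + cmod Y)"
  shows "cmod ((\<Sum>(n, m)\<in>S. f n m * X ^ m) - (\<Sum>(n, m)\<in>S. f n m * Y ^ m))
         \<le> ((\<Sum>(n, m)\<in>S. cmod (f n m)) * real D * 3 ^ D) * t * (1 + cmod Y) ^ D"
proof -
  define R where "R = 3 * (1 + cmod Y)"
  have X: "cmod X \<le> R"
  proof -
    have "cmod X \<le> cmod Y + cmod (X - Y)" by (metis norm_triangle_sub add.commute)
    also have "\<dots> \<le> cmod Y + 1 * (1 + cmod Y)" using XY t mult_right_mono[of t 1 "1 + cmod Y"] by simp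
    finally have "cmod X \<le> 2 * cmod Y + 1" by simp
    moreover have "2 * cmod Y + 1 \<le> 3 * (1 + cmod Y)" using norm_ge_zero[of Y] by (simp add: algebra_simps)
    ultimately show ?thesis unfolding R_def by linarith
  qed
  have Y: "cmod Y \<le> R" unfolding R_def by simp
  have R1: "R \<ge> 1" unfolding R_def by simp
  have key: "real D * cmod (X - Y) * R ^ (D - 1) \<le> real D * 3 ^ D * t * (1 + cmod Y) ^ D"
  proof -
    have "real D * cmod (X - Y) * R ^ (D - 1) \<le> real D * (t * (1 + cmod Y)) * R ^ (D - 1)"
      using XY by (intro mult_right_mono mult_left_mono) (auto simp: R_def)
    also have "\<dots> = real D * t * 3 ^ (D - 1) * ((1 + cmod Y) * (1 + cmod Y) ^ (D - 1))"
      unfolding R_def power_mult_distrib by (simp only: mult_ac)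
    also have "(1 + cmod Y) * (1 + cmod Y) ^ (D - 1) = (1 + cmod Y) ^ D"
      using assms(3) by (metis Suc_diff_1 less_le_trans zero_less_one power_Suc)
    also have "real D * t * 3 ^ (D - 1) * (1 + cmod Y) ^ D \<le> real D * t * 3 ^ D * (1 + cmod Y) ^ D"
      using t by (intro mult_right_mono mult_left_mono power_increasing) auto
    finally show ?thesis by (simp add: mult_ac)
  qed
  have "cmod ((\<Sum>(n, m)\<in>S. f n m * X ^ m) - (\<Sum>(n, m)\<in>S. f n m * Y ^ m))
      = cmod (\<Sum>(n, m)\<in>S. f n m * (X ^ m - Y ^ m))"
    by (simp add: sum_subtractf[symmetric] case_prod_unfold algebra_simps)
  also have "\<dots> \<le> (\<Sum>(n, m)\<in>S. cmod (f n m * (X ^ m - Y ^ m)))"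
    by (rule norm_sum[THEN order_trans]) (simp add: case_prod_unfold)
  also have "\<dots> \<le> (\<Sum>(n, m)\<in>S. cmod (f n m) * (real D * 3 ^ D * t * (1 + cmod Y) ^ D))"
  proof (rule sum_mono)
    fix p assume p: "p \<in> S"
    obtain n m where nm: "p = (n, m)" by (cases p)
    have "cmod (X ^ m - Y ^ m) \<le> real D * 3 ^ D * t * (1 + cmod Y) ^ D"
      using pow_diff_bound2[OF X Y R1, of m D] assms(2)[of n m] p nm key by simp
    then show "(case p of (n, m) \<Rightarrow> cmod (f n m * (X ^ m - Y ^ m))) \<le> (case p of (n, m) \<Rightarrow> cmod (f n m) * (real D * 3 ^ D * t * (1 + cmod Y) ^ D))"
      using nm by (simp add: norm_mult mult_left_mono)
  qed
  also have "\<dots> = (\<Sum>(n, m)\<in>S. cmod (f n m)) * (real D * 3 ^ D * t * (1 + cmod Y) ^ D)"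
    by (simp add: sum_distrib_right case_prod_unfold)
  also have "\<dots> = ((\<Sum>(n, m)\<in>S. cmod (f n m)) * real D * 3 ^ D) * t * (1 + cmod Y) ^ D"
    by (simp only: mult_ac)
  finally show ?thesis .
qed


lemma hgood_intro:
  fixes h :: "complex \<Rightarrow> complex"
  assumes d2: "d \<ge> 2" and B1: "B \<ge> 1" and R1: "R1 \<ge> 1" and C0: "C \<ge> 0"
    and hB: "\<And>x. cmod (h x) \<le> B * (1 + cmod x) ^ d"
    and hL: "\<And>x. cmod x \<ge> R1 \<Longrightarrow> cmod (h x) \<ge> cmod x ^ d / 2"
    and hC: "\<And>X Y t. 0 \<le> t \<Longrightarrow> t \<le> 1 \<Longrightarrow> cmod (X - Y) \<le> t * (1 + cmod Y) \<Longrightarrow>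
               cmod (h X - h Y) \<le> C * t * (1 + cmod Y) ^ d"
  shows "hgood h d B R1 (C * ((1 + R1) ^ d + 2 ^ (d + 1)))"
proof
  define Cp where "Cp = (1 + R1) ^ d + 2 ^ (d + 1)"
  have R1pow: "(1 + R1) ^ d \<ge> 0" using R1 by (intro zero_le_power) auto
  have Cp_bound: "(1 + cmod Y) ^ d \<le> Cp * (1 + cmod (h Y))" for Y
  proof (cases "cmod Y \<le> R1")
    case True
    have "(1 + cmod Y) ^ d \<le> (1 + R1) ^ d" using True by (intro power_mono) auto
    also have "\<dots> \<le> Cp" unfolding Cp_def by simp
    also have "\<dots> = Cp * 1" by simp
    also have "\<dots> \<le> Cp * (1 + cmod (h Y))" using R1pow unfolding Cp_def by (intro mult_left_mono) auto
    finally show ?thesis .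
  next
    case False
    have "(1 + cmod Y) ^ d \<le> (2 * cmod Y) ^ d" using False R1 by (intro power_mono) auto
    also have "\<dots> = 2 ^ d * cmod Y ^ d" by (simp add: power_mult_distrib)
    also have "\<dots> \<le> 2 ^ d * (2 * cmod (h Y))" using hL[of Y] False by simp
    also have "\<dots> = 2 ^ (d+1) * cmod (h Y)" by simp
    also have "\<dots> \<le> 2 ^ (d+1) * (1 + cmod (h Y))" by simp
    also have "\<dots> \<le> Cp * (1 + cmod (h Y))" unfolding Cp_def
      using R1pow by (intro mult_right_mono) auto
    finally show ?thesis .
  qed
  show "C * ((1 + R1) ^ d + 2 ^ (d + 1)) \<ge> 0" using C0 R1pow by simp
  fix X Y :: complex and t :: real
  assume t: "0 \<le> t" "t \<le> 1" and XY: "cmod (X - Y) \<le> t * (1 + cmod Y)"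
  have "cmod (h X - h Y) \<le> C * t * (1 + cmod Y) ^ d" by (rule hC[OF t XY])
  also have "\<dots> \<le> C * t * (Cp * (1 + cmod (h Y)))" using C0 t Cp_bound[of Y] by (intro mult_left_mono) auto
  finally show "cmod (h X - h Y) \<le> C * ((1 + R1) ^ d + 2 ^ (d + 1)) * t * (1 + cmod (h Y))"
    unfolding Cp_def by (simp add: mult_ac)
qed (use assms in auto)

lemma hsum_good:
  fixes a :: "nat \<Rightarrow> nat \<Rightarrow> complex"
  assumes fin: "finite T" and Tm: "\<And>n m. (n, m) \<in> T \<Longrightarrow> m \<le> d" and Tg: "(\<gamma>, d) \<in> T"
    and agd: "a \<gamma> d = 1" and Tdd: "\<And>n. (n, d) \<in> T \<Longrightarrow> n = \<gamma>" and d2: "d \<ge> 2"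
  shows "\<exists>B R1 C. hgood (\<lambda>x. \<Sum>(n, m)\<in>T. a n m * x ^ m) d B R1 C"
proof -
  define h where "h = (\<lambda>x. \<Sum>(n, m)\<in>T. a n m * x ^ m)"
  define S where "S = (\<Sum>(n, m)\<in>T. cmod (a n m))"
  define T' where "T' = T - {(\<gamma>, d)}"
  define S' where "S' = (\<Sum>(n, m)\<in>T'. cmod (a n m))"
  have S0: "S \<ge> 0" unfolding S_def by (intro sum_nonneg) (auto simp: case_prod_unfold)
  have S'0: "S' \<ge> 0" unfolding S'_def by (intro sum_nonneg) (auto simp: case_prod_unfold)
  have finT': "finite T'" using fin unfolding T'_def by simp
  have T'm: "m \<le> d - 1" if "(n, m) \<in> T'" for n m
  proof -
    have "m \<le> d" using Tm that unfolding T'_def by auto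
    moreover have "m \<noteq> d" using Tdd that unfolding T'_def by auto
    ultimately show ?thesis by auto
  qed
  have hsplit: "h x = x ^ d + (\<Sum>(n, m)\<in>T'. a n m * x ^ m)" for x
    unfolding h_def T'_def using sum.remove[OF fin Tg, of "\<lambda>(n, m). a n m * x ^ m"] agd by simp
  define R1 where "R1 = 1 + S' * 2 ^ d"
  have R1: "R1 \<ge> 1" unfolding R1_def using S'0 by simp
  have hB: "cmod (h x) \<le> (1 + S) * (1 + cmod x) ^ d" for x
  proof -
    have "cmod (h x) \<le> S * (1 + cmod x) ^ d" unfolding h_def S_def by (rule sum_bound[OF fin Tm])
    also have "\<dots> \<le> (1 + S) * (1 + cmod x) ^ d" by (intro mult_right_mono) auto
    finally show ?thesis .
  qed
  have hL: "cmod (h x) \<ge> cmod x ^ d / 2" if x: "cmod x \<ge> R1" for x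
  proof -
    have x1: "cmod x \<ge> 1" using x R1 by linarith
    have "cmod (\<Sum>(n, m)\<in>T'. a n m * x ^ m) \<le> S' * (1 + cmod x) ^ (d - 1)"
      unfolding S'_def by (rule sum_bound[OF finT' T'm])
    also have "\<dots> \<le> S' * (2 * cmod x) ^ (d - 1)" using x1 S'0 by (intro mult_left_mono power_mono) auto
    also have "\<dots> = (S' * 2 ^ d / 2) * cmod x ^ (d - 1)"
      using d2 by (simp add: power_mult_distrib power_diff)
    also have "\<dots> \<le> (cmod x / 2) * cmod x ^ (d - 1)"
      using x unfolding R1_def by (intro mult_right_mono) auto
    also have "\<dots> = cmod x ^ d / 2"
      using d2 by (simp add: power_eq_if[of _ d] split: if_splits)
    finally have r: "cmod (\<Sum>(n, m)\<in>T'. a n m * x ^ m) \<le> cmod x ^ d / 2" .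
    have xd: "x ^ d = h x - (\<Sum>(n, m)\<in>T'. a n m * x ^ m)" using hsplit[of x] by simp
    have "cmod (x ^ d) \<le> cmod (h x) + cmod (\<Sum>(n, m)\<in>T'. a n m * x ^ m)"
      unfolding xd by (rule norm_triangle_ineq4)
    then show ?thesis using r by (simp add: norm_power)
  qed
  have hC: "cmod (h X - h Y) \<le> (S * real d * 3 ^ d) * t * (1 + cmod Y) ^ d"
    if "0 \<le> t" "t \<le> 1" "cmod (X - Y) \<le> t * (1 + cmod Y)" for X Y t
    unfolding h_def S_def using sum_diff_bound[OF fin Tm _ that] d2 by simp
  have "hgood h d (1 + S) R1 ((S * real d * 3 ^ d) * ((1 + R1) ^ d + 2 ^ (d + 1)))"
    by (rule hgood_intro[OF d2 _ R1 _ hB hL hC]) (use S0 in auto)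
  then show ?thesis unfolding h_def by blast
qed



lemma Re_of_exp: assumes "exp L = (Z::complex)" "Z \<noteq> 0" shows "Re L = ln (cmod Z)"
proof -
  have "exp (Re L) = cmod Z" using assms by (metis norm_exp_eq_Re)
  then show ?thesis by (metis ln_exp)
qed

lemma theta_exp:
  fixes L L' r :: complex and \<alpha> :: real
  assumes ZL: "exp L = Z" and L': "L' = of_nat \<delta> * L + Ln r"
    and w: "real \<gamma> + \<alpha> * real d = \<alpha> * real \<delta>"
  shows "Z ^ \<gamma> * exp (- of_real \<alpha> * L') / exp (- of_real \<alpha> * L) ^ d = exp (- of_real \<alpha> * Ln r)"
proof -
  have wc: "(of_nat \<gamma> :: complex) + of_real \<alpha> * of_nat d = of_real \<alpha> * of_nat \<delta>"
  proof -
    have "(of_real (real \<gamma> + \<alpha> * real d) :: complex) = of_real (\<alpha> * real \<delta>)" using w by simp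
    then show ?thesis by simp
  qed
  have e1: "Z ^ \<gamma> = exp (of_nat \<gamma> * L)" using ZL by (simp add: exp_of_nat_mult)
  have e2: "exp (- of_real \<alpha> * L) ^ d = exp (of_nat d * (- of_real \<alpha> * L))" by (rule exp_of_nat_mult[symmetric])
  have "Z ^ \<gamma> * exp (- of_real \<alpha> * L') / exp (- of_real \<alpha> * L) ^ d
     = exp (of_nat \<gamma> * L + (- of_real \<alpha> * L') - of_nat d * (- of_real \<alpha> * L))"
    unfolding e1 e2 by (simp only: exp_add exp_diff)
  also have "of_nat \<gamma> * L + (- of_real \<alpha> * L') - of_nat d * (- of_real \<alpha> * L)
      = (of_nat \<gamma> + of_real \<alpha> * of_nat d - of_real \<alpha> * of_nat \<delta>) * L - of_real \<alpha> * Ln r"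
    unfolding L' by (simp add: algebra_simps)
  also have "\<dots> = - of_real \<alpha> * Ln r" using wc by simp
  finally show ?thesis .
qed

lemma Phi_T:
  fixes L Z :: complex and \<alpha> :: real
  assumes ZL: "exp L = Z" and j: "j \<le> \<gamma>" and m: "m \<le> d"
    and w: "real \<gamma> - real j = - \<alpha> * (real d - real m)"
  shows "Z ^ j * exp (- of_real \<alpha> * L) ^ (d - m) = Z ^ \<gamma>"
proof -
  have "exp (- of_real \<alpha> * L) ^ (d - m) = exp (of_nat (d - m) * (- of_real \<alpha> * L))" by (rule exp_of_nat_mult[symmetric])
  also have "of_nat (d - m) * (- of_real \<alpha> * L) = (of_nat (\<gamma> - j) :: complex) * L"
  proof -
    have "real (d - m) * (- \<alpha>) = real (\<gamma> - j)"
      using w j m by (simp add: of_nat_diff algebra_simps)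
    then have "(of_real (real (d - m) * (- \<alpha>)) :: complex) = of_real (real (\<gamma> - j))" by simp
    then have "(of_nat (d - m) :: complex) * (- of_real \<alpha>) = of_nat (\<gamma> - j)"
      by (simp only: of_real_mult of_real_minus of_real_of_nat_eq)
    then show ?thesis by (metis mult.assoc)
  qed
  also have "exp (of_nat (\<gamma> - j) * L) = Z ^ (\<gamma> - j)" using ZL by (simp add: exp_of_nat_mult)
  finally show ?thesis using j by (simp add: power_add[symmetric])
qed

lemma Phi_norm:
  fixes L Z :: complex and \<alpha> :: real
  assumes ZL: "exp L = Z" and Z: "Z \<noteq> 0" and m: "m \<le> d"
  shows "cmod (Z ^ j * exp (- of_real \<alpha> * L) ^ (d - m) / Z ^ \<gamma>)
       = cmod Z powr (real j - \<alpha> * (real d - real m) - real \<gamma>)"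
proof -
  have ReL: "Re L = ln (cmod Z)" by (rule Re_of_exp[OF ZL Z])
  have Zp: "cmod Z > 0" using Z by simp
  have "cmod (exp (- of_real \<alpha> * L) ^ (d - m)) = exp (- \<alpha> * ln (cmod Z)) ^ (d - m)"
    by (simp add: norm_power ReL)
  also have "\<dots> = exp (real (d - m) * (- \<alpha> * ln (cmod Z)))" by (rule exp_of_nat_mult[symmetric])
  also have "real (d - m) * (- \<alpha> * ln (cmod Z)) = (- \<alpha> * (real d - real m)) * ln (cmod Z)"
    using m by (simp add: of_nat_diff algebra_simps)
  finally have e1: "cmod (exp (- of_real \<alpha> * L) ^ (d - m)) = exp ((- \<alpha> * (real d - real m)) * ln (cmod Z))" .
  have e2: "cmod (Z ^ j) = exp (real j * ln (cmod Z))"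
    using Zp by (simp add: norm_power exp_of_nat_mult)
  have e3: "cmod (Z ^ \<gamma>) = exp (real \<gamma> * ln (cmod Z))"
    using Zp by (simp add: norm_power exp_of_nat_mult)
  have "cmod (Z ^ j * exp (- of_real \<alpha> * L) ^ (d - m) / Z ^ \<gamma>)
      = exp (real j * ln (cmod Z)) * exp ((- \<alpha> * (real d - real m)) * ln (cmod Z)) / exp (real \<gamma> * ln (cmod Z))"
    by (simp only: norm_mult norm_divide e1 e2 e3)
  also have "\<dots> = exp ((real j - \<alpha> * (real d - real m) - real \<gamma>) * ln (cmod Z))"
    by (simp add: exp_add[symmetric] exp_diff[symmetric] algebra_simps)
  also have "\<dots> = cmod Z powr (real j - \<alpha> * (real d - real m) - real \<gamma>)"
    using Zp by (simp add: powr_def)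
  finally show ?thesis .
qed

lemma term_identity:
  fixes A x Z l l' :: complex
  assumes l: "l \<noteq> 0" and Z: "Z \<noteq> 0" and m: "m \<le> d"
  shows "A * Z ^ j * (x / l) ^ m * l' = (Z ^ \<gamma> * l' / l ^ d) * (A * x ^ m * (Z ^ j * l ^ (d - m) / Z ^ \<gamma>))"
proof -
  have ld: "l ^ d = l ^ m * l ^ (d - m)" using m by (simp add: power_add[symmetric])
  show ?thesis unfolding ld using l Z by (simp add: field_simps power_divide)
qed



lemma poly_monic_bound:
  fixes p :: "complex poly"
  assumes "lead_coeff p = 1" "degree p = \<delta>" "\<delta> \<ge> 1"
  shows "\<exists>Sp\<ge>0. \<forall>u. cmod u \<ge> 1 \<longrightarrow> cmod (poly p u - u ^ \<delta>) \<le> Sp * cmod u ^ (\<delta> - 1)"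
proof -
  obtain k where k: "\<delta> = Suc k" using assms(3) by (cases \<delta>) auto
  define Sp where "Sp = (\<Sum>i\<le>k. cmod (coeff p i))"
  have "Sp \<ge> 0" unfolding Sp_def by (intro sum_nonneg) auto
  moreover have "cmod (poly p u - u ^ \<delta>) \<le> Sp * cmod u ^ (\<delta> - 1)" if u: "cmod u \<ge> 1" for u
  proof -
    have "poly p u = (\<Sum>i\<le>k. coeff p i * u ^ i) + coeff p (Suc k) * u ^ Suc k"
      unfolding poly_altdef using assms k by simp
    moreover have "coeff p (Suc k) = 1" using assms k by simp
    ultimately have "poly p u - u ^ \<delta> = (\<Sum>i\<le>k. coeff p i * u ^ i)" using k by simp
    also have "cmod \<dots> \<le> (\<Sum>i\<le>k. cmod (coeff p i * u ^ i))" by (rule norm_sum)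
    also have "\<dots> \<le> (\<Sum>i\<le>k. cmod (coeff p i) * cmod u ^ k)"
    proof (rule sum_mono)
      fix i assume "i \<in> {..k}"
      then have "cmod u ^ i \<le> cmod u ^ k" using u by (intro power_increasing) auto
      then show "cmod (coeff p i * u ^ i) \<le> cmod (coeff p i) * cmod u ^ k"
        by (simp add: norm_mult norm_power mult_left_mono)
    qed
    also have "\<dots> = Sp * cmod u ^ (\<delta> - 1)" unfolding Sp_def k by (simp add: sum_distrib_right)
    finally show ?thesis .
  qed
  ultimately show ?thesis by blast
qed

lemma Qiter_Suc: "Qiter p a (Suc k) z w = qeval a ((poly p ^^ k) z) (Qiter p a k z w)"
proof (induction k arbitrary: z w)
  case 0 then show ?case by simp
next
  case (Suc k)
  have "Qiter p a (Suc (Suc k)) z w = Qiter p a (Suc k) (poly p z) (qeval a z w)" by simp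
  also have "\<dots> = qeval a ((poly p ^^ k) (poly p z)) (Qiter p a k (poly p z) (qeval a z w))" by (rule Suc.IH)
  also have "(poly p ^^ k) (poly p z) = (poly p ^^ Suc k) z" by (simp add: funpow_Suc_right del: funpow.simps)
  finally show ?case by simp
qed

primrec Lseq :: "complex poly \<Rightarrow> nat \<Rightarrow> complex \<Rightarrow> nat \<Rightarrow> complex" where
  "Lseq p \<delta> z 0 = Ln z"
| "Lseq p \<delta> z (Suc n) = of_nat \<delta> * Lseq p \<delta> z n + Ln ((poly p ^^ Suc n) z / ((poly p ^^ n) z) ^ \<delta>)"

lemma exp_Lseq:
  assumes "\<And>n. (poly p ^^ n) z \<noteq> 0"
  shows "exp (Lseq p \<delta> z n) = (poly p ^^ n) z"
proof (induction n)
  case 0 then show ?case using assms[of 0] by simp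
next
  case (Suc n)
  have "exp (Lseq p \<delta> z (Suc n)) = exp (Lseq p \<delta> z n) ^ \<delta> * ((poly p ^^ Suc n) z / ((poly p ^^ n) z) ^ \<delta>)"
    using assms[of "Suc n"] assms[of n] by (simp add: exp_add exp_of_nat_mult del: funpow.simps)
  also have "\<dots> = (poly p ^^ Suc n) z" using Suc.IH assms[of n] by (simp del: funpow.simps)
  finally show ?case .
qed

locale mainctx =
  fixes p :: "complex poly" and a :: "nat \<Rightarrow> nat \<Rightarrow> complex"
    and \<delta> d \<gamma> :: nat
  assumes p_monic: "lead_coeff p = 1" and p_deg: "degree p = \<delta>" and \<delta>_ge: "\<delta> \<ge> 2"
    and q_fin: "finite (supp2 a)"
    and q_degw: "\<And>n m. m > d \<Longrightarrow> a n m = 0"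
    and d_ge: "d \<ge> 2"
    and b_monic: "a \<gamma> d = 1" and b_deg: "\<And>n. n > \<gamma> \<Longrightarrow> a n d = 0"
    and \<delta>_lt: "\<delta> < d" and \<gamma>_ge: "\<gamma> \<ge> 1"
    and alpha_eq: "alpha_exp a \<gamma> \<delta> d = real \<gamma> / (real \<delta> - real d)"
begin

definition "al = alpha_exp a \<gamma> \<delta> d"
definition "T = {(n, m). a n m \<noteq> 0 \<and> real n + al * real m = real \<gamma> + al * real d}"
definition "Lw = supp2 a - T"

lemma al_neg: "al < 0"
  unfolding al_def alpha_eq using \<delta>_lt \<gamma>_ge by (simp add: divide_pos_neg)

lemma wt: "real \<gamma> + al * real d = al * real \<delta>"
proof -
  have "al * (real \<delta> - real d) = real \<gamma>" unfolding al_def alpha_eq using \<delta>_lt by simp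
  then show ?thesis by (simp add: algebra_simps)
qed

lemma supp_m: assumes "(n, m) \<in> supp2 a" shows "m \<le> d"
proof (rule ccontr)
  assume "\<not> m \<le> d"
  then have "a n m = 0" using q_degw[of m n] by simp
  then show False using assms by (simp add: supp2_def)
qed

lemma supp_w:
  assumes nm: "(n, m) \<in> supp2 a" shows "real n + al * real m \<le> real \<gamma> + al * real d"
proof (cases "m = d")
  case True
  have "n \<le> \<gamma>"
  proof (rule ccontr)
    assume "\<not> n \<le> \<gamma>"
    then have "a n d = 0" using b_deg[of n] by simp
    then show False using nm True by (simp add: supp2_def)
  qed
  then show ?thesis using True by simp
next
  case False
  then have md: "m < d" using supp_m[OF nm] by simp
  define A where "A = {(real n - real \<gamma>) / (real d - real m) |n m. a n m \<noteq> 0 \<and> m < d}"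
  have "A \<subseteq> (\<lambda>(n, m). (real n - real \<gamma>) / (real d - real m)) ` supp2 a"
    unfolding A_def supp2_def by auto
  then have finA: "finite A" using q_fin by (meson finite_imageI finite_subset)
  have "(real n - real \<gamma>) / (real d - real m) \<in> A" unfolding A_def using nm md by (auto simp: supp2_def)
  then have "(real n - real \<gamma>) / (real d - real m) \<le> al"
    unfolding al_def alpha_exp_def A_def[symmetric] using finA by (intro Max_ge) auto
  then have "real n - real \<gamma> \<le> al * (real d - real m)" using md by (simp add: divide_le_eq)
  then show ?thesis by (simp add: algebra_simps)
qed

lemma T_sub: "T \<subseteq> supp2 a" unfolding T_def supp2_def by auto

lemma T_fin: "finite T" using T_sub q_fin by (rule finite_subset)

lemma T_facts:
  assumes "(n, m) \<in> T"
  shows "m \<le> d" "n \<le> \<gamma>" "real \<gamma> - real n = - al * (real d - real m)"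
proof -
  show md: "m \<le> d" using assms T_sub supp_m by auto
  have e: "real n + al * real m = real \<gamma> + al * real d" using assms unfolding T_def by auto
  then show "real \<gamma> - real n = - al * (real d - real m)" by (simp add: algebra_simps)
  have "al * (real d - real m) \<le> 0" using al_neg md by (simp add: mult_nonpos_nonneg)
  then show "n \<le> \<gamma>" using e by (simp add: algebra_simps)
qed

lemma Lw_gap:
  assumes "(n, m) \<in> Lw"
  shows "m \<le> d" "real n - al * (real d - real m) - real \<gamma> < 0"
proof -
  have s: "(n, m) \<in> supp2 a" and nt: "(n, m) \<notin> T" using assms unfolding Lw_def by auto
  show "m \<le> d" using supp_m[OF s] .
  have "real n + al * real m \<noteq> real \<gamma> + al * real d" using nt s unfolding T_def supp2_def by auto
  then have "real n + al * real m < real \<gamma> + al * real d" using supp_w[OF s] by linarith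
  then show "real n - al * (real d - real m) - real \<gamma> < 0" by (simp add: algebra_simps)
qed

lemma Lw_fin: "finite Lw" unfolding Lw_def using q_fin by simp

lemma h_good: "\<exists>B R1 C. hgood (hpoly a al \<gamma> d) d B R1 C"
proof -
  have hp: "hpoly a al \<gamma> d = (\<lambda>x. \<Sum>(n, m)\<in>T. a n m * x ^ m)"
    unfolding hpoly_def T_def by simp
  have "\<exists>B R1 C. hgood (\<lambda>x. \<Sum>(n, m)\<in>T. a n m * x ^ m) d B R1 C"
  proof (rule hsum_good[OF T_fin])
    show "\<And>n m. (n, m) \<in> T \<Longrightarrow> m \<le> d" using T_facts(1) by blast
    show "(\<gamma>, d) \<in> T" unfolding T_def using b_monic by simp
    show "a \<gamma> d = 1" by (rule b_monic)
    show "\<And>n. (n, d) \<in> T \<Longrightarrow> n = \<gamma>" unfolding T_def by auto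
    show "d \<ge> 2" by (rule d_ge)
  qed
  then show ?thesis unfolding hp .
qed

end



lemma pow_split: "n \<ge> 1 \<Longrightarrow> (x::'a::monoid_mult) ^ n = x * x ^ (n - 1)"
  by (cases n) auto

context mainctx begin

definition "Phi Z L n m = Z ^ n * exp (- of_real al * L) ^ (d - m) / Z ^ \<gamma>"

lemma main_identity:
  fixes Z L r x :: complex
  assumes ZL: "exp L = Z" and Z: "Z \<noteq> 0"
  shows "qeval a Z (x / exp (- of_real al * L)) * exp (- of_real al * (of_nat \<delta> * L + Ln r))
       = exp (- of_real al * Ln r) * hpoly a al \<gamma> d x
         + exp (- of_real al * Ln r) * (\<Sum>(n, m)\<in>Lw. (a n m * Phi Z L n m) * x ^ m)"
proof -
  define l where "l = exp (- of_real al * L)"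
  define l' where "l' = exp (- of_real al * (of_nat \<delta> * L + Ln r))"
  define \<theta> where "\<theta> = exp (- of_real al * Ln r)"
  have l0: "l \<noteq> 0" unfolding l_def by simp
  have th: "\<theta> = Z ^ \<gamma> * l' / l ^ d"
    unfolding \<theta>_def l_def l'_def by (rule theta_exp[OF ZL refl wt, symmetric])
  have tm: "a n m * Z ^ n * (x / l) ^ m * l' = \<theta> * (a n m * x ^ m * Phi Z L n m)"
    if "(n, m) \<in> supp2 a" for n m
    unfolding th Phi_def l_def[symmetric] using term_identity[OF l0 Z supp_m[OF that]] .
  have PhiT: "Phi Z L n m = 1" if "(n, m) \<in> T" for n m
  proof -
    have "Z ^ n * l ^ (d - m) = Z ^ \<gamma>"
      unfolding l_def using Phi_T[OF ZL T_facts(2,1,3)[OF that]] .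
    then show ?thesis unfolding Phi_def l_def[symmetric] using Z by simp
  qed
  have "qeval a Z (x / l) * l' = (\<Sum>(n, m)\<in>supp2 a. a n m * Z ^ n * (x / l) ^ m * l')"
    unfolding qeval_def by (simp add: sum_distrib_right case_prod_unfold)
  also have "\<dots> = (\<Sum>(n, m)\<in>supp2 a. \<theta> * (a n m * x ^ m * Phi Z L n m))"
    by (intro sum.cong refl) (auto simp: tm)
  also have "\<dots> = (\<Sum>(n, m)\<in>Lw. \<theta> * (a n m * x ^ m * Phi Z L n m)) + (\<Sum>(n, m)\<in>T. \<theta> * (a n m * x ^ m * Phi Z L n m))"
    unfolding Lw_def by (rule sum.subset_diff[OF T_sub q_fin])
  also have "(\<Sum>(n, m)\<in>T. \<theta> * (a n m * x ^ m * Phi Z L n m)) = \<theta> * hpoly a al \<gamma> d x"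
  proof -
    have "(\<Sum>(n, m)\<in>T. \<theta> * (a n m * x ^ m * Phi Z L n m)) = (\<Sum>(n, m)\<in>T. \<theta> * (a n m * x ^ m))"
      by (intro sum.cong refl) (auto simp: PhiT)
    also have "\<dots> = \<theta> * hpoly a al \<gamma> d x"
      unfolding hpoly_def T_def by (simp add: sum_distrib_left case_prod_unfold)
    finally show ?thesis .
  qed
  also have "(\<Sum>(n, m)\<in>Lw. \<theta> * (a n m * x ^ m * Phi Z L n m)) = \<theta> * (\<Sum>(n, m)\<in>Lw. (a n m * Phi Z L n m) * x ^ m)"
    by (simp add: sum_distrib_left case_prod_unfold mult_ac)
  finally show ?thesis unfolding l_def l'_def \<theta>_def by (simp add: add.commute)
qed

lemma E_bound:
  fixes Z L x :: complex
  assumes ZL: "exp L = Z" and Z: "Z \<noteq> 0"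
  shows "cmod (\<Sum>(n, m)\<in>Lw. (a n m * Phi Z L n m) * x ^ m)
     \<le> (\<Sum>(n, m)\<in>Lw. cmod (a n m) * cmod Z powr (real n - al * (real d - real m) - real \<gamma>)) * (1 + cmod x) ^ d"
proof -
  have "cmod (\<Sum>(n, m)\<in>Lw. (a n m * Phi Z L n m) * x ^ m) \<le> (\<Sum>(n, m)\<in>Lw. cmod (a n m * Phi Z L n m)) * (1 + cmod x) ^ d"
    by (rule sum_bound[OF Lw_fin Lw_gap(1)])
  also have "(\<Sum>(n, m)\<in>Lw. cmod (a n m * Phi Z L n m)) = (\<Sum>(n, m)\<in>Lw. cmod (a n m) * cmod Z powr (real n - al * (real d - real m) - real \<gamma>))"
  proof (intro sum.cong refl)
    fix p assume "p \<in> Lw"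
    then obtain n m where p: "p = (n, m)" "(n, m) \<in> Lw" by (cases p) auto
    show "(case p of (n, m) \<Rightarrow> cmod (a n m * Phi Z L n m)) = (case p of (n, m) \<Rightarrow> cmod (a n m) * cmod Z powr (real n - al * (real d - real m) - real \<gamma>))"
    proof -
      have "cmod (Phi Z L n m) = cmod Z powr (real n - al * (real d - real m) - real \<gamma>)"
        unfolding Phi_def by (rule Phi_norm[OF ZL Z Lw_gap(1)[OF p(2)]])
      then show ?thesis unfolding p by (simp add: norm_mult)
    qed
  qed
  finally show ?thesis .
qed


theorem final:
  "\<forall>\<epsilon>>0. \<exists>R>0. \<forall>z w. cmod z > R \<longrightarrow>
     \<bar>G_alpha p a d al z w - G_green (hpoly a al \<gamma> d) d (z powr (complex_of_real (- al)) * w)\<bar> < \<epsilon>"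
proof (intro allI impI)
  fix \<epsilon> :: real assume eps: "\<epsilon> > 0"
  obtain B R1 C where hg: "hgood (hpoly a al \<gamma> d) d B R1 C" using h_good by blast
  obtain \<eta>0 where e0: "\<eta>0 > 0" and GC: "\<forall>\<theta> E X. (\<forall>n. cmod (\<theta> n - 1) \<le> \<eta>0) \<longrightarrow> (\<forall>n x. cmod (E n x) \<le> \<eta>0 * (1 + cmod x) ^ d)
     \<longrightarrow> (\<forall>n. X (Suc n) = \<theta> n * hpoly a al \<gamma> d (X n) + E n (X n))
     \<longrightarrow> \<bar>lim (\<lambda>k. log_plus (cmod (X k)) / real d ^ k) - G_green (hpoly a al \<gamma> d) d (X 0)\<bar> < \<epsilon>"
    using hgood.green_compare[OF hg eps] by blast
  define \<eta> where "\<eta> = min \<eta>0 1"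
  have e: "\<eta> > 0" "\<eta> \<le> 1" "\<eta> \<le> \<eta>0" unfolding \<eta>_def using e0 by auto
  have cont: "isCont (\<lambda>u. exp (- of_real al * Ln u)) 1"
    by (intro continuous_intros) (auto simp: nonpos_Reals_def)
  obtain \<rho> where \<rho>: "\<rho> > 0" and \<rho>P: "\<And>u. dist u 1 < \<rho> \<Longrightarrow> dist (exp (- of_real al * Ln u)) (exp (- of_real al * Ln 1)) < \<eta>"
    using cont[unfolded continuous_at_eps_delta] e(1) by blast
  have gneg: "real (fst q) - al * (real d - real (snd q)) - real \<gamma> < 0" if "q \<in> Lw" for q
    using Lw_gap(2)[of "fst q" "snd q"] that by simp
  have lim: "((\<lambda>r::real. \<Sum>q\<in>Lw. cmod (a (fst q) (snd q)) * r powr (real (fst q) - al * (real d - real (snd q)) - real \<gamma>)) \<longlongrightarrow> 0) at_top"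
  proof -
    have "((\<lambda>r::real. \<Sum>q\<in>Lw. cmod (a (fst q) (snd q)) * r powr (real (fst q) - al * (real d - real (snd q)) - real \<gamma>))
          \<longlongrightarrow> (\<Sum>q\<in>Lw. cmod (a (fst q) (snd q)) * 0)) at_top"
      by (intro tendsto_sum tendsto_mult tendsto_const tendsto_neg_powr filterlim_ident gneg)
    then show ?thesis by simp
  qed
  have "eventually (\<lambda>r. (\<Sum>q\<in>Lw. cmod (a (fst q) (snd q)) * r powr (real (fst q) - al * (real d - real (snd q)) - real \<gamma>)) < \<eta> / 2) at_top"
    by (rule order_tendstoD(2)[OF lim]) (use e(1) in simp)
  then obtain Rg where Rg: "\<And>r. r \<ge> Rg \<Longrightarrow> (\<Sum>q\<in>Lw. cmod (a (fst q) (snd q)) * r powr (real (fst q) - al * (real d - real (snd q)) - real \<gamma>)) < \<eta> / 2"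
    unfolding eventually_at_top_linorder by blast
  obtain Sp where Sp0: "Sp \<ge> 0" and SpB: "\<And>u. cmod u \<ge> 1 \<Longrightarrow> cmod (poly p u - u ^ \<delta>) \<le> Sp * cmod u ^ (\<delta> - 1)"
    using poly_monic_bound[OF p_monic p_deg] \<delta>_ge by auto
  have pgrow: "cmod (poly p u) \<ge> cmod u" if u: "cmod u \<ge> max 2 (2 * Sp)" for u
  proof -
    have u1: "cmod u \<ge> 1" using u by simp
    have "cmod (u ^ \<delta>) \<le> cmod (poly p u) + cmod (poly p u - u ^ \<delta>)"
      using norm_triangle_ineq4[of "poly p u" "poly p u - u ^ \<delta>"] by simp
    then have "cmod u ^ \<delta> - Sp * cmod u ^ (\<delta> - 1) \<le> cmod (poly p u)" using SpB[OF u1] by (simp add: norm_power)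
    moreover have "cmod u ^ \<delta> = cmod u * cmod u ^ (\<delta> - 1)" using \<delta>_ge by (intro pow_split) auto
    ultimately have "(cmod u - Sp) * cmod u ^ (\<delta> - 1) \<le> cmod (poly p u)" by (simp add: algebra_simps)
    moreover have "1 * cmod u ^ 1 \<le> (cmod u - Sp) * cmod u ^ (\<delta> - 1)"
      using u u1 \<delta>_ge by (intro mult_mono power_increasing) auto
    ultimately show ?thesis by simp
  qed
  have pratio: "cmod (poly p u / u ^ \<delta> - 1) \<le> Sp / cmod u" if u1: "cmod u \<ge> 1" for u
  proof -
    have u0: "u \<noteq> 0" using u1 by auto
    have "poly p u / u ^ \<delta> - 1 = (poly p u - u ^ \<delta>) / u ^ \<delta>" using u0 by (simp add: field_simps)
    then have "cmod (poly p u / u ^ \<delta> - 1) = cmod (poly p u - u ^ \<delta>) / cmod u ^ \<delta>" by (simp add: norm_divide norm_power)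
    also have "\<dots> \<le> Sp * cmod u ^ (\<delta> - 1) / cmod u ^ \<delta>" using SpB[OF u1] u0 by (intro divide_right_mono) auto
    also have "cmod u ^ \<delta> = cmod u * cmod u ^ (\<delta> - 1)" using \<delta>_ge by (intro pow_split) auto
    also have "Sp * cmod u ^ (\<delta> - 1) / (cmod u * cmod u ^ (\<delta> - 1)) = Sp / cmod u" using u0 by simp
    finally show ?thesis .
  qed
  define R where "R = max (max (max 2 (2 * Sp)) Rg) (Sp / \<rho>)"
  show "\<exists>R>0. \<forall>z w. cmod z > R \<longrightarrow>
     \<bar>G_alpha p a d al z w - G_green (hpoly a al \<gamma> d) d (z powr (complex_of_real (- al)) * w)\<bar> < \<epsilon>"
  proof (intro exI[of _ R] conjI allI impI)
    show "R > 0" unfolding R_def by simp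
    fix z w assume z: "cmod z > R"
    have zR: "cmod z \<ge> max 2 (2 * Sp)" "cmod z \<ge> Rg" "cmod z > Sp / \<rho>" using z unfolding R_def by auto
    define zs where "zs = (\<lambda>n. (poly p ^^ n) z)"
    have zsS: "zs (Suc n) = poly p (zs n)" for n unfolding zs_def by simp
    have zs_ge: "cmod (zs n) \<ge> cmod z" for n
    proof (induction n)
      case 0 then show ?case unfolding zs_def by simp
    next
      case (Suc n)
      have "cmod (zs n) \<ge> max 2 (2 * Sp)" using Suc zR(1) by linarith
      then have "cmod (poly p (zs n)) \<ge> cmod (zs n)" by (rule pgrow)
      then show ?case using Suc unfolding zsS by linarith
    qed
    have zpos: "cmod z > 0" using zR(1) by linarith
    have zs_nz: "zs n \<noteq> 0" for n using zs_ge[of n] zpos by auto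
    have zs_nz': "(poly p ^^ n) z \<noteq> 0" for n using zs_nz[of n] unfolding zs_def .
    define L where "L = Lseq p \<delta> z"
    have expL: "exp (L n) = zs n" for n unfolding L_def zs_def by (rule exp_Lseq[OF zs_nz'])
    have LS: "L (Suc n) = of_nat \<delta> * L n + Ln (zs (Suc n) / zs n ^ \<delta>)" for n
      unfolding L_def zs_def by simp
    define lam where "lam = (\<lambda>n. exp (- of_real al * L n))"
    define th where "th = (\<lambda>n. exp (- of_real al * Ln (zs (Suc n) / zs n ^ \<delta>)))"
    define E where "E = (\<lambda>n x. th n * (\<Sum>(j, m)\<in>Lw. (a j m * Phi (zs n) (L n) j m) * x ^ m))"
    define W where "W = (\<lambda>n. Qiter p a n z w * lam n)"
    have lam0: "lam n \<noteq> 0" for n unfolding lam_def by simp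
    have Wrec: "W (Suc n) = th n * hpoly a al \<gamma> d (W n) + E n (W n)" for n
    proof -
      have Q: "Qiter p a n z w = W n / lam n" unfolding W_def using lam0[of n] by simp
      have "W (Suc n) = Qiter p a (Suc n) z w * lam (Suc n)" unfolding W_def by simp
      also have "\<dots> = qeval a (zs n) (Qiter p a n z w) * lam (Suc n)" unfolding Qiter_Suc zs_def ..
      also have "\<dots> = qeval a (zs n) (W n / lam n) * lam (Suc n)" unfolding Q ..
      also have "\<dots> = qeval a (zs n) (W n / exp (- of_real al * L n)) * exp (- of_real al * (of_nat \<delta> * L n + Ln (zs (Suc n) / zs n ^ \<delta>)))"
        unfolding lam_def LS by simp
      also have "\<dots> = th n * hpoly a al \<gamma> d (W n) + E n (W n)"
        unfolding th_def E_def by (rule main_identity[OF expL zs_nz])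
      finally show ?thesis .
    qed
    have thb: "cmod (th n - 1) < \<eta>" for n
    proof -
      have z1: "cmod (zs n) \<ge> 1" using zs_ge[of n] zR(1) by linarith
      have "cmod (zs (Suc n) / zs n ^ \<delta> - 1) \<le> Sp / cmod (zs n)"
        unfolding zsS by (rule pratio[OF z1])
      also have "\<dots> \<le> Sp / cmod z" using zs_ge[of n] zpos Sp0 by (intro divide_left_mono mult_pos_pos) auto
      also have "\<dots> < \<rho>" using zR(3) zpos \<rho> by (simp add: divide_less_eq mult.commute pos_divide_less_eq)
      finally have "dist (zs (Suc n) / zs n ^ \<delta>) 1 < \<rho>" by (simp add: dist_norm)
      from \<rho>P[OF this] show ?thesis unfolding th_def by (simp add: dist_norm)
    qed
    have Eb: "cmod (E n x) \<le> \<eta> * (1 + cmod x) ^ d" for n x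
    proof -
      have th2: "cmod (th n) \<le> 2"
      proof -
        have "cmod (th n) \<le> cmod (th n - 1) + cmod (1::complex)" by (metis diff_add_cancel norm_triangle_ineq)
        then show ?thesis using thb[of n] e(2) by simp
      qed
      have sb: "(\<Sum>(j, m)\<in>Lw. cmod (a j m) * cmod (zs n) powr (real j - al * (real d - real m) - real \<gamma>)) < \<eta> / 2"
        using Rg[of "cmod (zs n)"] zs_ge[of n] zR(2) by (simp add: case_prod_unfold)
      have "cmod (E n x) = cmod (th n) * cmod (\<Sum>(j, m)\<in>Lw. (a j m * Phi (zs n) (L n) j m) * x ^ m)"
        unfolding E_def by (simp add: norm_mult)
      also have "\<dots> \<le> 2 * ((\<Sum>(j, m)\<in>Lw. cmod (a j m) * cmod (zs n) powr (real j - al * (real d - real m) - real \<gamma>)) * (1 + cmod x) ^ d)"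
        using th2 E_bound[OF expL zs_nz, of n x] by (intro mult_mono) auto
      also have "\<dots> \<le> 2 * ((\<eta> / 2) * (1 + cmod x) ^ d)"
        using sb by (intro mult_left_mono mult_right_mono) auto
      finally show ?thesis by simp
    qed
    have main: "\<bar>lim (\<lambda>k. log_plus (cmod (W k)) / real d ^ k) - G_green (hpoly a al \<gamma> d) d (W 0)\<bar> < \<epsilon>"
    proof (rule GC[rule_format])
      show "cmod (th n - 1) \<le> \<eta>0" for n using thb[of n] e(3) by linarith
      show "cmod (E n x) \<le> \<eta>0 * (1 + cmod x) ^ d" for n x
        using Eb[of n x] e(3) mult_right_mono[of \<eta> \<eta>0 "(1 + cmod x) ^ d"] by simp
      show "W (Suc n) = th n * hpoly a al \<gamma> d (W n) + E n (W n)" for n by (rule Wrec)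
    qed
    have GA: "G_alpha p a d al z w = lim (\<lambda>k. log_plus (cmod (W k)) / real d ^ k)"
    proof -
      have "cmod (Qiter p a k z w) / cmod ((poly p ^^ k) z) powr al = cmod (W k)" for k
      proof -
        have ReL: "Re (L k) = ln (cmod (zs k))" by (rule Re_of_exp[OF expL zs_nz])
        have "cmod ((poly p ^^ k) z) powr al = exp (al * ln (cmod (zs k)))"
          using zs_nz[of k] unfolding zs_def by (simp add: powr_def)
        moreover have "cmod (lam k) = exp (- (al * ln (cmod (zs k))))" unfolding lam_def by (simp add: ReL)
        ultimately show ?thesis unfolding W_def by (simp add: norm_mult exp_minus field_simps)
      qed
      then show ?thesis unfolding G_alpha_def by simp
    qed
    have W0: "W 0 = z powr (complex_of_real (- al)) * w"
      using zs_nz[of 0] unfolding W_def lam_def L_def zs_def by (simp add: powr_def mult.commute)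
    show "\<bar>G_alpha p a d al z w - G_green (hpoly a al \<gamma> d) d (z powr (complex_of_real (- al)) * w)\<bar> < \<epsilon>"
      using main unfolding GA W0 .
  qed
qed

end



theorem proposition5p11:
  fixes p :: "complex poly" and a :: "nat \<Rightarrow> nat \<Rightarrow> complex"
    and \<delta> d \<gamma> :: nat
  assumes p_monic: "lead_coeff p = 1" and p_deg: "degree p = \<delta>" and \<delta>_ge: "\<delta> \<ge> 2"
    and q_fin: "finite (supp2 a)"
    and q_degw: "\<And>n m. m > d \<Longrightarrow> a n m = 0"
    and d_ge: "d \<ge> 2"
    and b_monic: "a \<gamma> d = 1" and b_deg: "\<And>n. n > \<gamma> \<Longrightarrow> a n d = 0"
    and \<delta>_lt: "\<delta> < d" and \<gamma>_ge: "\<gamma> \<ge> 1"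
    and alpha_eq: "alpha_exp a \<gamma> \<delta> d = real \<gamma> / (real \<delta> - real d)"
  shows "\<forall>\<epsilon>>0. \<exists>R>0. \<forall>z w. cmod z > R \<longrightarrow>
           \<bar>G_alpha p a d (alpha_exp a \<gamma> \<delta> d) z w
             - G_green (hpoly a (alpha_exp a \<gamma> \<delta> d) \<gamma> d) d
                 (z powr (complex_of_real (- alpha_exp a \<gamma> \<delta> d)) * w)\<bar> < \<epsilon>"
  proof -
  have M: "mainctx p a \<delta> d \<gamma>"
    unfolding mainctx_def using p_monic p_deg \<delta>_ge q_fin q_degw d_ge b_monic b_deg \<delta>_lt \<gamma>_ge alpha_eq by blast
  have E: "mainctx.al a \<delta> d \<gamma> = alpha_exp a \<gamma> \<delta> d" using mainctx.al_def[OF M] by simp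
  show ?thesis using mainctx.final[OF M] unfolding E .
qed

end
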